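(* Let $m\in[0,1]$, $\varepsilon\ge0$ with $m+\varepsilon>0$, and let $a\in C(m)$. Let $u,v\in L^{m+1}(\Omega)$ if $\varepsilon=0$, and $u,v\in L^2(\Omega)$ if $\varepsilon>0$. Then $(g_\varepsilon^m(u)-g_\varepsilon^m(v))\overline{(u-v)}\in L^1(\Omega)$ and $$\Re\Big(-\mathrm{i}a\int_\Omega\big(g_\varepsilon^m(u)-g_\varepsilon^m(v)\big)\overline{(u-v)}\,dx\Big)\ge0.$$
   Context: $\Omega\subseteq\mathbb{R}^N$ nonempty open; functions complex-valued. $g_\varepsilon^m(u)(x)=(|u(x)|^2+\varepsilon)^{-\frac{1-m}{2}}u(x)$ (with value $0$ where $u(x)=0$ when $\varepsilon=0$). $C(m)=\{z\in\mathbb{C}:\Im z>0,\ 2\sqrt m\,\Im z\ge(1-m)|\Re z|\}$. *)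

theory Defs
  imports "HOL-Analysis.Analysis"
begin

definition g_eps :: "real \<Rightarrow> real \<Rightarrow> ('a \<Rightarrow> complex) \<Rightarrow> 'a \<Rightarrow> complex" where
  "g_eps eps m u x =
     (if u x = 0 then 0
      else complex_of_real (((norm (u x))\<^sup>2 + eps) powr (- (1 - m) / 2))) * u x"

definition cone_C :: "real \<Rightarrow> complex set" where
  "cone_C m = {z. Im z > 0 \<and> 2 * sqrt m * Im z \<ge> (1 - m) * \<bar>Re z\<bar>}"

definition in_Lp :: "'a::euclidean_space set \<Rightarrow> real \<Rightarrow> ('a \<Rightarrow> complex) \<Rightarrow> bool" where
  "in_Lp \<Omega> p u \<longleftrightarrow> u \<in> borel_measurable (lebesgue_on \<Omega>)
      \<and> integrable (lebesgue_on \<Omega>) (\<lambda>x. norm (u x) powr p)"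

end

theory Submission
  imports Defs
begin

definition Gf :: "real \<Rightarrow> real \<Rightarrow> complex \<Rightarrow> complex" where
  "Gf eps m z = (if z = 0 then 0 else complex_of_real (((norm z)\<^sup>2 + eps) powr (- (1 - m) / 2))) * z"

lemma phi_nonneg:
  fixes m L :: real assumes m: "0 \<le> m" "m \<le> 1" and L: "0 \<le> L"
  shows "(1-m) * sinh ((1+m)*L) - (1+m) * sinh ((1-m)*L) \<ge> 0"
proof -
  let ?f = "\<lambda>L. (1-m) * sinh ((1+m)*L) - (1+m) * sinh ((1-m)*L)"
  have "?f 0 \<le> ?f L"
  proof (rule DERIV_nonneg_imp_nondecreasing[OF L])
    fix x :: real assume x: "0 \<le> x" "x \<le> L"
    have D: "DERIV ?f x :> (1-m) * (cosh ((1+m)*x) * (1+m)) - (1+m) * (cosh ((1-m)*x) * (1-m))"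
      by (auto intro!: derivative_eq_intros)
    have "cosh ((1-m)*x) \<le> cosh ((1+m)*x)"
      using x m by (subst cosh_real_nonneg_le_iff) (auto intro: mult_right_mono)
    moreover have "(1-m) * (cosh ((1+m)*x) * (1+m)) - (1+m) * (cosh ((1-m)*x) * (1-m)) = ((1-m)*(1+m)) * (cosh ((1+m)*x) - cosh ((1-m)*x))"
      by (simp add: algebra_simps)
    ultimately have "(1-m) * (cosh ((1+m)*x) * (1+m)) - (1+m) * (cosh ((1-m)*x) * (1-m)) \<ge> 0"
      using m by simp
    with D show "\<exists>y. DERIV ?f x :> y \<and> y \<ge> 0" by blast
  qed
  thus ?thesis by simp
qed

lemma G_nonneg:
  fixes m L :: real assumes m: "0 \<le> m" "m \<le> 1" and L: "0 \<le> L"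
  shows "(1-m)^2 * (cosh ((1+m)*L) - cosh ((1-m)*L)) - 4*m*(cosh ((1-m)*L) - 1) \<ge> 0"
proof -
  let ?f = "\<lambda>L. (1-m)^2 * (cosh ((1+m)*L) - cosh ((1-m)*L)) - 4*m*(cosh ((1-m)*L) - 1)"
  have "?f 0 \<le> ?f L"
  proof (rule DERIV_nonneg_imp_nondecreasing[OF L])
    fix x :: real assume x: "0 \<le> x" "x \<le> L"
    have "DERIV ?f x :> (1-m)^2 * (sinh ((1+m)*x) * (1+m) - sinh ((1-m)*x) * (1-m)) - 4*m*(sinh ((1-m)*x) * (1-m))"
      by (auto intro!: derivative_eq_intros)
    moreover have "(1-m)^2 * (sinh ((1+m)*x) * (1+m) - sinh ((1-m)*x) * (1-m)) - 4*m*(sinh ((1-m)*x) * (1-m))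
       = ((1-m)*(1+m)) * ((1-m) * sinh ((1+m)*x) - (1+m) * sinh ((1-m)*x))"
      by (simp add: algebra_simps power2_eq_square)
    moreover have "((1-m)*(1+m)) * ((1-m) * sinh ((1+m)*x) - (1+m) * sinh ((1-m)*x)) \<ge> 0"
      using phi_nonneg[OF m x(1)] m by simp
    ultimately show "\<exists>y. DERIV ?f x :> y \<and> y \<ge> 0" by auto
  qed
  thus ?thesis by simp
qed

lemma base_ineq:
  fixes m \<rho> :: real assumes m: "0 \<le> m" "m \<le> 1" and r: "1 \<le> \<rho>"
  shows "4*m*(\<rho> - \<rho> powr m)^2 \<le> (1-m)^2 * ((\<rho> powr m)^2 - 1) * (\<rho>^2 - 1)"
proof -
  define L where "L = ln \<rho>"
  have L: "0 \<le> L" using r by (simp add: L_def)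
  define A where "A = exp L"
  define B where "B = exp (m*L)"
  have A: "\<rho> = A" using r by (simp add: A_def L_def)
  have Bp: "\<rho> powr m = B" using r by (simp add: B_def L_def powr_def)
  have Apos: "A > 0" "B > 0" by (simp_all add: A_def B_def)
  have e1: "exp ((1+m)*L) = A*B" by (simp add: A_def B_def algebra_simps flip: exp_add)
  have e2: "exp (-((1+m)*L)) = 1/(A*B)" unfolding exp_minus e1 by (simp add: divide_inverse)
  have e3: "exp ((1-m)*L) = A/B" by (simp add: A_def B_def algebra_simps flip: exp_diff)
  have e4: "exp (-((1-m)*L)) = B/A" unfolding exp_minus e3 by (simp add: divide_inverse)
  have G: "(1-m)^2 * (cosh ((1+m)*L) - cosh ((1-m)*L)) - 4*m*(cosh ((1-m)*L) - 1) \<ge> 0"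
    by (rule G_nonneg[OF m L])
  have c1: "cosh ((1+m)*L) = (A*B + 1/(A*B))/2" by (simp add: cosh_def e1 e2)
  have c2: "cosh ((1-m)*L) = (A/B + B/A)/2" by (simp add: cosh_def e3 e4)
  have "0 \<le> (A*B) * ((1-m)^2 * (cosh ((1+m)*L) - cosh ((1-m)*L)) - 4*m*(cosh ((1-m)*L) - 1))"
    using G Apos by simp
  also have "\<dots> = ((1-m)^2 * (B^2 - 1) * (A^2 - 1) - 4*m*(A - B)^2) / 2"
    unfolding c1 c2 using Apos by (simp add: field_simps power2_eq_square)
  finally show ?thesis unfolding Bp by (simp add: A)
qed

lemma mu_ineq:
  fixes m \<rho> \<mu> :: real assumes m: "0 \<le> m" "m \<le> 1" and r: "1 \<le> \<rho>"
    and mu: "\<rho> powr m \<le> \<mu>" "\<mu> \<le> \<rho>"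
  shows "4*m*(\<rho> - \<mu>)^2 \<le> (1-m)^2 * (\<mu>^2 - 1) * (\<rho>^2 - 1)"
proof -
  have pm1: "1 \<le> \<rho> powr m" using r m by (simp add: ge_one_powr_ge_zero)
  have "(\<rho> - \<mu>)^2 \<le> (\<rho> - \<rho> powr m)^2"
    using mu by (intro power_mono) auto
  hence "4*m*(\<rho> - \<mu>)^2 \<le> 4*m*(\<rho> - \<rho> powr m)^2" using m by (simp add: mult_left_mono)
  also have "\<dots> \<le> (1-m)^2 * ((\<rho> powr m)^2 - 1) * (\<rho>^2 - 1)" by (rule base_ineq[OF m r])
  also have "\<dots> \<le> (1-m)^2 * (\<mu>^2 - 1) * (\<rho>^2 - 1)"
  proof -
    have "(\<rho> powr m)^2 \<le> \<mu>^2" using mu pm1 by (intro power_mono) auto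
    moreover have "0 \<le> \<rho>^2 - 1" using r by (simp add: one_le_power)
    ultimately show ?thesis by (intro mult_right_mono mult_left_mono) auto
  qed
  finally show ?thesis .
qed

lemma star_ineq:
  fixes m r s H K :: real assumes m: "0 \<le> m" "m \<le> 1" and rs: "0 < s" "s \<le> r"
    and HK: "0 < K" "(r/s) powr m \<le> H/K" "H/K \<le> r/s"
  shows "4*m*(H* s - K*r)^2 \<le> (1-m)^2 * (H^2-K^2) * (r^2-s^2)"
proof -
  have r1: "1 \<le> r/s" using rs by simp
  have *: "4*m*(r/s - H/K)^2 \<le> (1-m)^2 * ((H/K)^2 - 1) * ((r/s)^2 - 1)"
    by (rule mu_ineq[OF m r1 HK(2,3)])
  have e1: "(H* s - K*r)^2 = (K* s)^2 * (r/s - H/K)^2" using rs HK by (simp add: field_simps power2_eq_square)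
  have e2: "(H^2-K^2) * (r^2-s^2) = (K* s)^2 * (((H/K)^2 - 1) * ((r/s)^2 - 1))"
    using rs HK by (simp add: field_simps power2_eq_square)
  have "(K* s)^2 * (4*m*(r/s - H/K)^2) \<le> (K* s)^2 * ((1-m)^2 * ((H/K)^2 - 1) * ((r/s)^2 - 1))"
    using * by (intro mult_left_mono) auto
  thus ?thesis unfolding e1 mult.assoc[of "(1-m)^2"] e2 by (simp add: algebra_simps)
qed

lemma ratio_bounds:
  fixes m eps r s :: real assumes m: "0 \<le> m" "m \<le> 1" and e: "0 \<le> eps" and rs: "0 < s" "s \<le> r"
  defines "p \<equiv> (r^2+eps) powr (-(1-m)/2)" and "q \<equiv> (s^2+eps) powr (-(1-m)/2)"
  shows "(r/s) powr m \<le> (p*r)/(q* s)" "(p*r)/(q* s) \<le> r/s" "0 < q"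
proof -
  have sp: "0 < s^2+eps" "0 < r^2+eps" using rs e by (auto intro: add_pos_nonneg)
  define R where "R = (r^2+eps)/(s^2+eps)"
  have R1: "1 \<le> R" unfolding R_def using sp rs by (simp add: power_mono)
  have pq: "p/q = R powr (-(1-m)/2)" unfolding p_def q_def R_def using sp by (simp add: powr_divide)
  have rs1: "1 \<le> (r/s)^2" using rs by (simp add: one_le_power)
  have rr: "(r/s)^2 * s^2 = r^2" using rs by (simp add: power_divide)
  have A1: "(r/s)^2 * (s^2+eps) = r^2 + eps * (r/s)^2" unfolding distrib_left rr by simp
  have A2: "eps * 1 \<le> eps * (r/s)^2" using mult_left_mono[OF rs1 e] .
  have A3: "r^2+eps \<le> (r/s)^2 * (s^2+eps)" unfolding A1 using A2 by linarith
  have Rle: "R \<le> (r/s)^2" unfolding R_def using sp A3 by (subst pos_divide_le_eq) auto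
  have up: "p/q \<le> 1" unfolding pq using R1 m powr_mono[of "-(1-m)/2" 0 R] by simp
  have "((r/s)^2) powr (-(1-m)/2) \<le> R powr (-(1-m)/2)"
    using Rle R1 m by (intro powr_mono2') auto
  moreover have "((r/s)^2) powr (-(1-m)/2) = (r/s) powr (m-1)"
  proof -
    have "(r/s)^2 = (r/s) powr 2" using rs by simp
    hence "((r/s)^2) powr (-(1-m)/2) = (r/s) powr (2 * (-(1-m)/2))" by (simp add: powr_powr)
    also have "2 * (-(1-m)/2) = m - 1" by simp
    finally show ?thesis .
  qed
  ultimately have lo: "(r/s) powr (m-1) \<le> p/q" unfolding pq by simp
  have qpos: "0 < q" unfolding q_def using sp by simp
  have eqr: "(p*r)/(q* s) = (r/s) * (p/q)" by (simp add: ac_simps)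
  have "(r/s) powr m = (r/s) powr (1 + (m-1))" by simp
  also have "\<dots> = (r/s) powr 1 * (r/s) powr (m-1)" by (rule powr_add)
  also have "\<dots> = (r/s) * (r/s) powr (m-1)" using rs by simp
  also have "\<dots> \<le> (r/s) * (p/q)" using lo rs by (intro mult_left_mono) auto
  finally show "(r/s) powr m \<le> (p*r)/(q* s)" using eqr by simp
  show "(p*r)/(q* s) \<le> r/s" unfolding eqr using up rs mult_left_mono[OF up, of "r/s"] by simp
  show "0 < q" by (rule qpos)
qed

lemma hpair_le:
  fixes m eps r s :: real assumes m: "0 \<le> m" "m \<le> 1" and e: "0 \<le> eps" and rs: "0 < s" "s \<le> r"
  defines "p \<equiv> (r^2+eps) powr (-(1-m)/2)" and "q \<equiv> (s^2+eps) powr (-(1-m)/2)"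
  shows "4*m*(r* s*(p-q))^2 \<le> (1-m)^2 * ((p*r-q* s)*(r-s)) * ((p*r+q* s)*(r+s))"
    "0 \<le> (p*r-q* s)*(r-s)"
proof -
  note rb = ratio_bounds[OF m e rs, folded p_def q_def]
  have Kp: "0 < q* s" using rb(3) rs by simp
  have "4*m*((p*r)* s - (q* s)*r)^2 \<le> (1-m)^2 * ((p*r)^2-(q* s)^2) * (r^2-s^2)"
    by (rule star_ineq[OF m rs Kp rb(1,2)])
  moreover have "(p*r)* s - (q* s)*r = r* s*(p-q)" by (simp add: algebra_simps)
  moreover have "((p*r)^2-(q* s)^2) * (r^2-s^2) = ((p*r-q* s)*(r-s)) * ((p*r+q* s)*(r+s))"
    by (simp add: algebra_simps power2_eq_square)
  ultimately show "4*m*(r* s*(p-q))^2 \<le> (1-m)^2 * ((p*r-q* s)*(r-s)) * ((p*r+q* s)*(r+s))"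
    by (simp add: mult.assoc)
  have "1 \<le> (r/s) powr m" using rs m by (simp add: ge_one_powr_ge_zero)
  hence "1 \<le> (p*r)/(q* s)" using rb(1) by linarith
  hence "q* s \<le> p*r" using Kp by (simp add: le_divide_eq)
  thus "0 \<le> (p*r-q* s)*(r-s)" using rs by simp
qed

lemma hpair:
  fixes m eps r s :: real assumes m: "0 \<le> m" "m \<le> 1" and e: "0 \<le> eps" and rs: "0 < s" "0 < r"
  defines "p \<equiv> (r^2+eps) powr (-(1-m)/2)" and "q \<equiv> (s^2+eps) powr (-(1-m)/2)"
  shows "4*m*(r* s*(p-q))^2 \<le> (1-m)^2 * ((p*r-q* s)*(r-s)) * ((p*r+q* s)*(r+s))"
    "0 \<le> (p*r-q* s)*(r-s)"
proof -
  have "4*m*(r* s*(p-q))^2 \<le> (1-m)^2 * ((p*r-q* s)*(r-s)) * ((p*r+q* s)*(r+s)) \<and> 0 \<le> (p*r-q* s)*(r-s)"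
  proof (cases "s \<le> r")
    case True thus ?thesis using hpair_le[OF m e rs(1) True] unfolding p_def q_def by blast
  next
    case False
    hence sr: "r \<le> s" by simp
    note h = hpair_le[OF m e rs(2) sr, folded p_def q_def]
    have a: "(s*r*(q-p))^2 = (r* s*(p-q))^2" by (simp add: algebra_simps power2_eq_square)
    have b: "(q* s+p*r)*(s+r) = (p*r+q* s)*(r+s)"
      by (simp add: algebra_simps)
    have c: "(q* s-p*r)*(s-r) = (p*r-q* s)*(r-s)" by (simp add: algebra_simps)
    show ?thesis using h unfolding a b c by blast
  qed
  thus "4*m*(r* s*(p-q))^2 \<le> (1-m)^2 * ((p*r-q* s)*(r-s)) * ((p*r+q* s)*(r+s))"
    "0 \<le> (p*r-q* s)*(r-s)" by auto
qed

lemma quad_step: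
  fixes m p q r s U Z e f X :: real
  assumes h: "4*m*(r* s*(p-q))^2 \<le> (1-m)^2*U*Z" and U: "0\<le>U" and Z: "0\<le>Z"
    and ef: "0\<le>e" "0\<le>f" and rs: "r* s > 0" and m: "0 \<le> m"
    and X: "2*r* s*X = U*f + Z*e"
  shows "4*m*(p-q)^2*(e*f) \<le> (1-m)^2 * X^2"
proof -
  have amgm: "4*(U*Z)*(e*f) \<le> (U*f + Z*e)^2"
  proof -
    have "0 \<le> (U*f - Z*e)^2" by simp
    thus ?thesis by (simp add: algebra_simps power2_eq_square)
  qed
  have ef0: "0 \<le> 4*(e*f)" using ef by simp
  have "(4*m*(r* s*(p-q))^2) * (4*(e*f)) \<le> ((1-m)^2*U*Z) * (4*(e*f))"
    by (rule mult_right_mono[OF h ef0])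
  also have "\<dots> = (1-m)^2 * (4*(U*Z)*(e*f))" by (simp add: algebra_simps)
  also have "\<dots> \<le> (1-m)^2 * (U*f + Z*e)^2" by (rule mult_left_mono[OF amgm]) simp
  also have "\<dots> = (1-m)^2 * (2*r* s*X)^2" using X by simp
  finally have *: "(4*(r* s)^2) * (4*m*(p-q)^2*(e*f)) \<le> (4*(r* s)^2) * ((1-m)^2 * X^2)"
    by (simp add: algebra_simps power2_eq_square)
  have "0 < (r* s)^2" using rs by (simp only: zero_less_power2)
  hence "0 < 4*(r* s)^2" by simp
  thus ?thesis using * by (simp only: mult_le_cancel_left_pos)
qed

lemma P_identities:
  fixes z w :: complex and p q :: real
  defines "P \<equiv> (of_real p * z - of_real q * w) * cnj (z - w)"
  shows "Re P = p*(cmod z)^2 + q*(cmod w)^2 - (p+q) * Re (z * cnj w)"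
    "Im P = (q-p) * Im (z * cnj w)"
    "(Re (z * cnj w))^2 + (Im (z * cnj w))^2 = (cmod z * cmod w)^2"
proof -
  obtain a b where z: "z = Complex a b" by (cases z)
  obtain c d where w: "w = Complex c d" by (cases w)
  show "Re P = p*(cmod z)^2 + q*(cmod w)^2 - (p+q) * Re (z * cnj w)"
    unfolding P_def cmod_power2 z w by (simp add: algebra_simps power2_eq_square)
  show "Im P = (q-p) * Im (z * cnj w)"
    unfolding P_def z w by (simp add: algebra_simps)
  show "(Re (z * cnj w))^2 + (Im (z * cnj w))^2 = (cmod z * cmod w)^2"
    unfolding power_mult_distrib cmod_power2 z w by (simp add: algebra_simps power2_eq_square)
qed

lemma pointwise:
  fixes z w :: complex and m eps :: real
  assumes m: "0 \<le> m" "m \<le> 1" and e: "0 \<le> eps"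
  defines "P \<equiv> (Gf eps m z - Gf eps m w) * cnj (z - w)"
  shows "0 \<le> Re P \<and> 2 * sqrt m * \<bar>Im P\<bar> \<le> (1-m) * Re P"
proof -
  define r where "r = cmod z"
  define s where "s = cmod w"
  define p where "p = (r^2+eps) powr (-(1-m)/2)"
  define q where "q = (s^2+eps) powr (-(1-m)/2)"
  have Gz: "Gf eps m z = of_real p * z" unfolding Gf_def p_def r_def by simp
  have Gw: "Gf eps m w = of_real q * w" unfolding Gf_def q_def s_def by simp
  have PP: "P = (of_real p * z - of_real q * w) * cnj (z - w)" unfolding P_def Gz Gw ..
  define t where "t = Re (z * cnj w)"
  define im where "im = Im (z * cnj w)"
  have ReP: "Re P = p*r^2 + q* s^2 - (p+q)*t" unfolding PP P_identities r_def s_def t_def ..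
  have ImP: "Im P = (q-p)*im" unfolding PP P_identities im_def ..
  have sq: "t^2 + im^2 = (r* s)^2" unfolding t_def im_def r_def s_def by (rule P_identities)
  have p0: "0 \<le> p" "0 \<le> q" unfolding p_def q_def by simp_all
  show ?thesis
  proof (cases "r = 0 \<or> s = 0")
    case True
    hence "t = 0 \<and> im = 0" using sq by (auto simp: power2_eq_square)
    hence "Re P = p*r^2 + q* s^2" "Im P = 0" using ReP ImP by auto
    moreover have "0 \<le> p*r^2 + q* s^2" using p0 by simp
    ultimately show ?thesis using m by simp
  next
    case False
    hence rs: "0 < r" "0 < s" unfolding r_def s_def by auto
    note hp = hpair[OF m e rs(2,1), folded p_def q_def]
    define U where "U = (p*r-q* s)*(r-s)"
    define Z where "Z = (p*r+q* s)*(r+s)"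
    define ee where "ee = r* s - t"
    define f where "f = r* s + t"
    have tle: "\<bar>t\<bar> \<le> r* s"
    proof -
      have "0 \<le> im^2" by simp
      hence "t^2 \<le> (r* s)^2" using sq by linarith
      hence "\<bar>t\<bar> \<le> \<bar>r* s\<bar>" by (simp only: abs_le_square_iff)
      thus ?thesis using rs by simp
    qed
    have ef: "0 \<le> ee" "0 \<le> f" unfolding ee_def f_def using tle by auto
    have im2: "im^2 = ee*f" unfolding ee_def f_def using sq by (simp add: algebra_simps power2_eq_square)
    have Z0: "0 \<le> Z" unfolding Z_def using p0 rs by simp
    have X: "2*r* s*Re P = U*f + Z*ee" unfolding ReP U_def Z_def ee_def f_def
      by (simp add: algebra_simps power2_eq_square)
    have XU: "Re P = U + (p+q)*ee" unfolding ReP U_def ee_def by (simp add: algebra_simps power2_eq_square)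
    have X0: "0 \<le> Re P" unfolding XU using hp(2) p0 ef unfolding U_def by simp
    have rs0: "r* s > 0" using rs by simp
    have Q: "4*m*(p-q)^2*(ee*f) \<le> (1-m)^2 * (Re P)^2"
      by (rule quad_step[OF hp(1)[folded U_def Z_def] hp(2)[folded U_def] Z0 ef rs0 m(1) X])
    have "(2 * sqrt m * \<bar>Im P\<bar>)^2 = 4*(sqrt m)^2*(Im P)^2" by (simp add: power_mult_distrib)
    also have "\<dots> = 4*m*(Im P)^2" using m by simp
    also have "\<dots> = 4*m*(p-q)^2*(ee*f)" unfolding ImP power_mult_distrib im2
      by (simp add: power2_eq_square algebra_simps)
    finally have eq: "(2 * sqrt m * \<bar>Im P\<bar>)^2 = 4*m*(p-q)^2*(ee*f)" .
    have "((1-m) * Re P)^2 = (1-m)^2 * (Re P)^2" by (rule power_mult_distrib)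
    hence sqle: "(2 * sqrt m * \<bar>Im P\<bar>)^2 \<le> ((1-m) * Re P)^2" using Q eq by linarith
    have "2 * sqrt m * \<bar>Im P\<bar> \<le> (1-m) * Re P"
    proof (rule power2_le_imp_le[OF sqle])
      show "0 \<le> (1-m) * Re P" using X0 m by simp
    qed
    thus ?thesis using X0 by simp
  qed
qed


lemma Gf_meas: "Gf eps m \<in> borel_measurable borel"
  unfolding Gf_def by measurable

lemma g_eps_Gf: "g_eps eps m u = (\<lambda>x. Gf eps m (u x))"
  unfolding g_eps_def Gf_def by (rule ext) simp

lemma young_powr:
  fixes a b m :: real assumes "0 \<le> a" "0 \<le> b" "0 \<le> m"
  shows "a powr m * b \<le> a powr (m+1) + b powr (m+1)"
proof (cases "a \<le> b")
  case True
  have "a powr m * b \<le> b powr m * b" using True assms by (intro mult_right_mono powr_mono2) auto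
  also have "\<dots> = b powr (m+1)" using assms by (simp add: powr_add)
  finally show ?thesis using assms by (smt (verit) powr_ge_zero)
next
  case False
  have "a powr m * b \<le> a powr m * a" using False assms by (intro mult_left_mono) auto
  also have "\<dots> = a powr (m+1)" using assms by (simp add: powr_add)
  finally show ?thesis using assms by (smt (verit) powr_ge_zero)
qed

lemma norm_P_le:
  fixes z w :: complex
  shows "norm ((Gf eps m z - Gf eps m w) * cnj (z - w)) \<le> (norm (Gf eps m z) + norm (Gf eps m w)) * (cmod z + cmod w)"
proof -
  have "norm ((Gf eps m z - Gf eps m w) * cnj (z - w)) = norm (Gf eps m z - Gf eps m w) * cmod (z - w)"
    by (simp add: norm_mult del: complex_cnj_diff)
  also have "\<dots> \<le> (norm (Gf eps m z) + norm (Gf eps m w)) * (cmod z + cmod w)"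
    by (intro mult_mono norm_triangle_ineq4) auto
  finally show ?thesis .
qed

lemma norm_Gf0:
  fixes z :: complex assumes "0 \<le> m"
  shows "norm (Gf 0 m z) = cmod z powr m"
proof (cases "z = 0")
  case True thus ?thesis by (simp add: Gf_def)
next
  case False
  hence r: "0 < cmod z" by simp
  have "norm (Gf 0 m z) = ((cmod z)^2) powr (-(1-m)/2) * cmod z"
    using False by (simp add: Gf_def norm_mult)
  also have "((cmod z)^2) powr (-(1-m)/2) = cmod z powr (2 * (-(1-m)/2))"
  proof -
    have e: "(cmod z)^2 = cmod z powr 2" using r by simp
    show ?thesis by (subst e) (rule powr_powr)
  qed
  also have "cmod z powr (2 * (-(1-m)/2)) * cmod z = cmod z powr (2 * (-(1-m)/2) + 1)"
    using r by (simp add: powr_add)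
  also have "2 * (-(1-m)/2) + 1 = m" by (simp add: field_simps)
  finally show ?thesis .
qed

lemma bound0:
  fixes z w :: complex assumes "0 \<le> m"
  shows "norm ((Gf 0 m z - Gf 0 m w) * cnj (z - w)) \<le> 3 * (cmod z powr (m+1) + cmod w powr (m+1))"
proof -
  define A where "A = cmod z"
  define B where "B = cmod w"
  have c1: "norm ((Gf 0 m z - Gf 0 m w) * cnj (z - w)) \<le> (A powr m + B powr m) * (A + B)"
    using norm_P_le[of 0 m z w] norm_Gf0[OF assms] unfolding A_def B_def by simp
  have c2: "(A powr m + B powr m) * (A + B) = A powr m * A + B powr m * B + A powr m * B + B powr m * A"
    by (simp add: algebra_simps)
  have c3: "A powr m * A = A powr (m+1)" unfolding A_def by (simp add: powr_add)
  have c4: "B powr m * B = B powr (m+1)" unfolding B_def by (simp add: powr_add)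
  have y1: "A powr m * B \<le> A powr (m+1) + B powr (m+1)"
    using young_powr[OF _ _ assms, of A B] unfolding A_def B_def by simp
  have y2: "B powr m * A \<le> A powr (m+1) + B powr (m+1)"
    using young_powr[OF _ _ assms, of B A] unfolding A_def B_def by simp
  have lin: "(x1::real) \<le> 3 * (y1 + y2)" if "x1 \<le> x2 + x3 + x4 + x5" "x4 \<le> y1 + y2" "x5 \<le> y1 + y2" "x2 = y1" "x3 = y2"
    for x1 x2 x3 x4 x5 y1 y2 :: real using that by simp
  have "norm ((Gf 0 m z - Gf 0 m w) * cnj (z - w)) \<le> 3 * (A powr (m+1) + B powr (m+1))"
    by (rule lin[OF c1[unfolded c2] y1 y2 c3 c4])
  thus ?thesis unfolding A_def B_def .
qed

lemma norm_Gfp: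
  fixes z :: complex assumes "0 < eps" "0 \<le> m" "m \<le> 1"
  shows "norm (Gf eps m z) \<le> eps powr (-(1-m)/2) * cmod z"
proof (cases "z = 0")
  case True thus ?thesis by (simp add: Gf_def)
next
  case False
  have "norm (Gf eps m z) = ((cmod z)^2 + eps) powr (-(1-m)/2) * cmod z"
    using False assms by (simp add: Gf_def norm_mult)
  also have "\<dots> \<le> eps powr (-(1-m)/2) * cmod z"
    using assms by (intro mult_right_mono powr_mono2') auto
  finally show ?thesis .
qed

lemma boundp:
  fixes z w :: complex assumes "0 < eps" "0 \<le> m" "m \<le> 1"
  shows "norm ((Gf eps m z - Gf eps m w) * cnj (z - w)) \<le> 2 * eps powr (-(1-m)/2) * (cmod z powr 2 + cmod w powr 2)"
proof -
  let ?A = "cmod z" and ?B = "cmod w" and ?c = "eps powr (-(1-m)/2)"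
  have "norm ((Gf eps m z - Gf eps m w) * cnj (z - w)) \<le> (norm (Gf eps m z) + norm (Gf eps m w)) * (?A + ?B)"
    by (rule norm_P_le)
  also have "\<dots> \<le> (?c * ?A + ?c * ?B) * (?A + ?B)"
    using norm_Gfp[OF assms, of z] norm_Gfp[OF assms, of w] by (intro mult_right_mono add_mono) auto
  also have "\<dots> = ?c * (?A + ?B)^2" by (simp add: algebra_simps power2_eq_square)
  also have "\<dots> \<le> ?c * (2 * (?A^2 + ?B^2))"
  proof (intro mult_left_mono)
    have "0 \<le> (?A - ?B)^2" by simp
    thus "(?A + ?B)^2 \<le> 2 * (?A^2 + ?B^2)" by (simp add: algebra_simps power2_eq_square)
  qed simp
  finally show ?thesis by (simp add: algebra_simps)
qed

lemma cone_step:
  fixes a :: complex and m X Y :: real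
  assumes a: "a \<in> cone_C m" and m: "0 \<le> m" "m \<le> 1" and X: "0 \<le> X" and XY: "2 * sqrt m * \<bar>Y\<bar> \<le> (1-m) * X"
  shows "0 \<le> Im a * X + Re a * Y"
proof -
  have ai: "0 < Im a" and ac: "(1-m) * \<bar>Re a\<bar> \<le> 2 * sqrt m * Im a" using a by (auto simp: cone_C_def)
  have main: "\<bar>Re a\<bar> * \<bar>Y\<bar> \<le> Im a * X"
  proof (cases "m = 1")
    case True
    hence "Y = 0" using XY by simp
    thus ?thesis using ai X by simp
  next
    case m1: False
    show ?thesis
    proof (cases "m = 0")
      case True
      hence "Re a = 0" using ac by simp
      thus ?thesis using ai X by simp
    next
      case False
      hence mp: "0 < m" "m < 1" using m m1 by auto
      have "((1-m) * \<bar>Re a\<bar>) * (2 * sqrt m * \<bar>Y\<bar>) \<le> (2 * sqrt m * Im a) * ((1-m) * X)"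
        by (rule mult_mono[OF ac XY]) (use ai real_sqrt_ge_zero[OF m(1)] in auto)
      hence "((1-m) * (2 * sqrt m)) * (\<bar>Re a\<bar> * \<bar>Y\<bar>) \<le> ((1-m) * (2 * sqrt m)) * (Im a * X)"
        by (simp add: algebra_simps)
      moreover have "0 < (1-m) * (2 * sqrt m)" using mp by simp
      ultimately show ?thesis by (simp only: mult_le_cancel_left_pos)
    qed
  qed
  have "- (Re a * Y) \<le> \<bar>Re a\<bar> * \<bar>Y\<bar>" by (simp add: abs_mult[symmetric])
  thus ?thesis using main by linarith
qed

theorem corollary5p8:
  fixes \<Omega> :: "'a::euclidean_space set"
    and m eps :: real and a :: complex and u v :: "'a \<Rightarrow> complex"
  assumes "open \<Omega>" and "\<Omega> \<noteq> {}"
    and "0 \<le> m" and "m \<le> 1" and "0 \<le> eps" and "m + eps > 0"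
    and "a \<in> cone_C m"
    and "eps = 0 \<Longrightarrow> in_Lp \<Omega> (m + 1) u \<and> in_Lp \<Omega> (m + 1) v"
    and "eps > 0 \<Longrightarrow> in_Lp \<Omega> 2 u \<and> in_Lp \<Omega> 2 v"
  shows "integrable (lebesgue_on \<Omega>)
           (\<lambda>x. (g_eps eps m u x - g_eps eps m v x) * cnj (u x - v x))
     \<and> Re (- \<i> * a * (LINT x|lebesgue_on \<Omega>. (g_eps eps m u x - g_eps eps m v x) * cnj (u x - v x))) \<ge> 0"
proof -
  let ?f = "\<lambda>x. (g_eps eps m u x - g_eps eps m v x) * cnj (u x - v x)"
  have meps: "0 \<le> m" "m \<le> 1" using assms by auto
  have uv: "u \<in> borel_measurable (lebesgue_on \<Omega>)" "v \<in> borel_measurable (lebesgue_on \<Omega>)"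
    using assms(5,8,9) unfolding in_Lp_def by (cases "eps = 0"; auto)+
  have fG: "?f = (\<lambda>x. (Gf eps m (u x) - Gf eps m (v x)) * cnj (u x - v x))"
    unfolding g_eps_Gf ..
  have mu[measurable]: "(\<lambda>x. Gf eps m (u x)) \<in> borel_measurable (lebesgue_on \<Omega>)"
    using measurable_compose[OF uv(1) Gf_meas] by (simp add: o_def)
  have mv[measurable]: "(\<lambda>x. Gf eps m (v x)) \<in> borel_measurable (lebesgue_on \<Omega>)"
    using measurable_compose[OF uv(2) Gf_meas] by (simp add: o_def)
  note uv[measurable]
  have cnjm[measurable]: "cnj \<in> borel_measurable borel"
    by (intro borel_measurable_continuous_onI continuous_on_cnj continuous_on_id)
  have mc[measurable]: "(\<lambda>x. cnj (u x - v x)) \<in> borel_measurable (lebesgue_on \<Omega>)"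
    using measurable_compose[OF borel_measurable_diff[OF uv] cnjm] by (simp add: o_def)
  have meas: "?f \<in> borel_measurable (lebesgue_on \<Omega>)"
    unfolding fG by measurable
  have int: "integrable (lebesgue_on \<Omega>) ?f"
  proof (cases "eps = 0")
    case True
    hence L: "in_Lp \<Omega> (m + 1) u" "in_Lp \<Omega> (m + 1) v" using assms(8) by auto
    have iB: "integrable (lebesgue_on \<Omega>) (\<lambda>x. 3 * (cmod (u x) powr (m+1) + cmod (v x) powr (m+1)))"
      using L unfolding in_Lp_def by (intro integrable_mult_right integrable_add) auto
    show ?thesis
    proof (rule Bochner_Integration.integrable_bound[OF iB meas])
      show "AE x in lebesgue_on \<Omega>. norm (?f x) \<le> norm (3 * (cmod (u x) powr (m+1) + cmod (v x) powr (m+1)))"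
        using bound0[OF meps(1)] True by (intro AE_I2) (simp add: g_eps_Gf abs_of_nonneg)
    qed
  next
    case False
    hence ep: "0 < eps" using assms(5) by simp
    hence L: "in_Lp \<Omega> 2 u" "in_Lp \<Omega> 2 v" using assms(9) by auto
    have iB: "integrable (lebesgue_on \<Omega>) (\<lambda>x. 2 * eps powr (-(1-m)/2) * (cmod (u x) powr 2 + cmod (v x) powr 2))"
      using L unfolding in_Lp_def by (intro integrable_mult_right integrable_add) auto
    show ?thesis
    proof (rule Bochner_Integration.integrable_bound[OF iB meas])
      show "AE x in lebesgue_on \<Omega>. norm (?f x) \<le> norm (2 * eps powr (-(1-m)/2) * (cmod (u x) powr 2 + cmod (v x) powr 2))"
        using boundp[OF ep meps] by (intro AE_I2) (simp add: g_eps_Gf abs_of_nonneg del: powr_numeral)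
    qed
  qed
  have int2: "integrable (lebesgue_on \<Omega>) (\<lambda>x. (- \<i> * a) * ?f x)"
    using int by (rule integrable_mult_right)
  have e1: "(LINT x|lebesgue_on \<Omega>. (- \<i> * a) * ?f x) = (- \<i> * a) * (LINT x|lebesgue_on \<Omega>. ?f x)"
    by (rule integral_mult_right_zero)
  have e2: "(LINT x|lebesgue_on \<Omega>. Re ((- \<i> * a) * ?f x)) = Re (LINT x|lebesgue_on \<Omega>. (- \<i> * a) * ?f x)"
    by (rule integral_Re[OF int2])
  have "Re (- \<i> * a * (LINT x|lebesgue_on \<Omega>. ?f x)) = (LINT x|lebesgue_on \<Omega>. Re ((- \<i> * a) * ?f x))"
    unfolding e2 e1 ..
  also have "\<dots> \<ge> 0"
  proof (rule Bochner_Integration.integral_nonneg)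
    fix x
    have pw: "0 \<le> Re (?f x) \<and> 2 * sqrt m * \<bar>Im (?f x)\<bar> \<le> (1-m) * Re (?f x)"
      unfolding g_eps_Gf by (rule pointwise[OF meps assms(5)])
    have eq: "Re ((- \<i> * a) * ?f x) = Im a * Re (?f x) + Re a * Im (?f x)" by (simp add: algebra_simps)
    show "0 \<le> Re ((- \<i> * a) * ?f x)" unfolding eq
      by (rule cone_step[OF assms(7) meps pw[THEN conjunct1] pw[THEN conjunct2]])
  qed
  finally show ?thesis using int by simp
qed

end
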